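(* Let $n\ge 1$ be an integer, let $\alpha\in[0,1)$, and let $\overrightarrow{P_n}$ be the directed path with vertex set $\{v_1,\dots,v_n\}$ and arc set $\{(v_1,v_2),(v_2,v_3),\dots,(v_{n-1},v_n)\}$. Then the singular values of $A_{\alpha}(\overrightarrow{P_n})$ are, as a multiset, $0$ (with multiplicity $1$) together with $$\sqrt{2\alpha^2-2\alpha+1+2\alpha(1-\alpha)\cos\frac{j\pi}{n}},\qquad j=1,2,\dots,n-1.$$
   Context: Digraphs are simple: a finite vertex set and a set of arcs, which are ordered pairs of distinct vertices, with no parallel arcs (a pair of opposite arcs $(u,v),(v,u)$ is allowed). For a digraph $D$ on vertices $v_1,\dots,v_n$, the adjacency matrix $A(D)=(a_{ij})$ has $a_{ij}=1$ if $(v_i,v_j)$ is an arc and $0$ otherwise; $d_i^+$ is the outdegree of $v_i$ (number of arcs with tail $v_i$), and $\Delta^+(D)=\mathrm{diag}(d_1^+,\dots,d_n^+)$. For $\alpha\in[0,1)$, $A_\alpha(D)=\alpha\Delta^+(D)+(1-\alpha)A(D)$. The singular values of a real square matrix $B$ are the nonnegative square roots of the eigenvalues of $BB^{T}$, counted with multiplicity. *)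

theory Defs
  imports "Jordan_Normal_Form.Matrix" "Jordan_Normal_Form.Char_Poly"
begin

text \<open>A digraph on the vertex set v_0,...,v_(n-1) (indices 0..n-1) given by its arc set.\<close>

definition adj_matrix :: "nat \<Rightarrow> (nat \<times> nat) set \<Rightarrow> real mat" where
  "adj_matrix n E = mat n n (\<lambda>(i,j). if (i,j) \<in> E then 1 else 0)"

definition outdeg :: "nat \<Rightarrow> (nat \<times> nat) set \<Rightarrow> nat \<Rightarrow> nat" where
  "outdeg n E i = card {j. j < n \<and> (i,j) \<in> E}"

definition outdeg_matrix :: "nat \<Rightarrow> (nat \<times> nat) set \<Rightarrow> real mat" where
  "outdeg_matrix n E = mat n n (\<lambda>(i,j). if i = j then real (outdeg n E i) else 0)"

definition A_alpha :: "real \<Rightarrow> nat \<Rightarrow> (nat \<times> nat) set \<Rightarrow> real mat" where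
  "A_alpha \<alpha> n E = \<alpha> \<cdot>\<^sub>m outdeg_matrix n E + (1 - \<alpha>) \<cdot>\<^sub>m adj_matrix n E"

definition dipath_arcs :: "nat \<Rightarrow> (nat \<times> nat) set" where
  "dipath_arcs n = {(i, i + 1) | i. i + 1 < n}"

text \<open>For the real symmetric matrix B B^T the characteristic polynomial splits over the reals,
  so its real roots (with multiplicity) are all its eigenvalues.\<close>
definition singular_values :: "real mat \<Rightarrow> real multiset" where
  "singular_values B = image_mset sqrt (proots (char_poly (B * transpose_mat B)))"

end

theory Submission
  imports Defs
begin


lemma arcs_mem: "(i,j) \<in> dipath_arcs n \<longleftrightarrow> j = Suc i \<and> Suc i < n"
  unfolding dipath_arcs_def by auto

lemma outdeg_path: "outdeg n (dipath_arcs n) i = (if Suc i < n then 1 else 0)"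
proof -
  have "{j. j < n \<and> (i,j) \<in> dipath_arcs n} = (if Suc i < n then {Suc i} else {})"
    by (auto simp: arcs_mem)
  thus ?thesis unfolding outdeg_def by simp
qed

lemma A_carrier: "A_alpha a n (dipath_arcs n) \<in> carrier_mat n n"
  unfolding A_alpha_def outdeg_matrix_def adj_matrix_def by simp

lemma A_entry: assumes "i < n" "k < n"
  shows "A_alpha a n (dipath_arcs n) $$ (i,k) =
     (if k = i \<and> Suc i < n then a else 0) + (if k = Suc i then 1 - a else 0)"
  using assms unfolding A_alpha_def outdeg_matrix_def adj_matrix_def
  by (auto simp: outdeg_path arcs_mem)

lemma A_mult: assumes "i < n" "w \<in> carrier_vec n"
  shows "(A_alpha a n (dipath_arcs n) *\<^sub>v w) $ i =
     (if Suc i < n then a * w $ i + (1 - a) * w $ Suc i else 0)"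
proof -
  let ?A = "A_alpha a n (dipath_arcs n)"
  have "(?A *\<^sub>v w) $ i = (\<Sum>k<n. ?A $$ (i,k) * w $ k)"
    using assms A_carrier[of a n] by (auto simp: scalar_prod_def lessThan_atLeast0)
  also have "\<dots> = (\<Sum>k<n. (if k = i \<and> Suc i < n then a * w $ k else 0) + (if k = Suc i then (1 - a) * w $ k else 0))"
    by (rule sum.cong) (auto simp: A_entry assms)
  also have "\<dots> = (if Suc i < n then a * w $ i + (1 - a) * w $ Suc i else 0)"
    using assms by (simp add: sum.distrib sum.delta' )
  finally show ?thesis .
qed

lemma AT_mult: assumes "k < n" "w \<in> carrier_vec n"
  shows "(transpose_mat (A_alpha a n (dipath_arcs n)) *\<^sub>v w) $ k =
     (if Suc k < n then a * w $ k else 0) + (if 0 < k then (1 - a) * w $ (k - 1) else 0)"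
proof -
  let ?A = "A_alpha a n (dipath_arcs n)"
  have "(transpose_mat ?A *\<^sub>v w) $ k = (\<Sum>i<n. ?A $$ (i,k) * w $ i)"
    using assms A_carrier[of a n] by (auto simp: scalar_prod_def lessThan_atLeast0)
  also have "\<dots> = (\<Sum>i<n. (if i = k \<and> Suc k < n then a * w $ i else 0) + (if i = k - 1 \<and> 0 < k then (1 - a) * w $ i else 0))"
    by (rule sum.cong) (auto simp: A_entry assms)
  also have "\<dots> = (if Suc k < n then a * w $ k else 0) + (if 0 < k then (1 - a) * w $ (k - 1) else 0)"
    using assms by (simp add: sum.distrib sum.delta' )
  finally show ?thesis .
qed


lemma trig3: "sin (real k * t) + sin ((real k + 2) * t) = 2 * cos t * sin ((real k + 1) * t)"
proof -
  define x where "x = (real k + 1) * t"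
  have "real k * t = x - t" "(real k + 2) * t = x + t" unfolding x_def by (simp_all add: algebra_simps)
  moreover have "sin (x - t) + sin (x + t) = 2 * cos t * sin x" by (simp add: sin_add sin_diff)
  ultimately show ?thesis unfolding x_def by simp
qed

lemma eigen_root:
  fixes a :: real
  assumes j: "1 \<le> j" "j < n"
  defines "B \<equiv> A_alpha a n (dipath_arcs n) * transpose_mat (A_alpha a n (dipath_arcs n))"
  shows "poly (char_poly B) (a^2 + (1-a)^2 + 2*a*(1-a)*cos (real j * pi / real n)) = 0"
proof -
  let ?A = "A_alpha a n (dipath_arcs n)"
  define t where "t = real j * pi / real n"
  define l where "l = a^2 + (1-a)^2 + 2*a*(1-a)*cos t"
  define v where "v = vec n (\<lambda>i. sin ((real i + 1) * t))"
  have A: "?A \<in> carrier_mat n n" by (rule A_carrier)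
  have Bc: "B \<in> carrier_mat n n" using A unfolding B_def by simp
  have v: "v \<in> carrier_vec n" unfolding v_def by simp
  have sn: "sin (real n * t) = 0" using j unfolding t_def by (simp add: sin_zero_iff_int2)
  have t0: "0 < t" "t < pi" using j unfolding t_def by (auto simp: field_simps)
  have "sin t \<noteq> 0" using t0 sin_gt_zero by force
  hence "v $ 0 \<noteq> 0" using j unfolding v_def by simp
  hence vnz: "v \<noteq> 0\<^sub>v n" using j by auto
  define w where "w = transpose_mat ?A *\<^sub>v v"
  have w: "w \<in> carrier_vec n" unfolding w_def using A v by simp
  have wk: "w $ k = a * sin ((real k + 1) * t) + (1 - a) * sin (real k * t)" if "k < n" for k
  proof -
    have "w $ k = (if Suc k < n then a * v $ k else 0) + (if 0 < k then (1 - a) * v $ (k - 1) else 0)"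
      unfolding w_def by (rule AT_mult[OF that v])
    moreover have "Suc k = n \<Longrightarrow> sin ((real k + 1) * t) = 0" using sn by (metis of_nat_Suc add.commute)
    moreover have "0 < k \<Longrightarrow> real (k - 1) + 1 = real k" by simp
    ultimately show ?thesis using that j by (auto simp: v_def)
  qed
  have "B *\<^sub>v v = ?A *\<^sub>v w" unfolding B_def w_def
    using A v by (simp add: assoc_mult_mat_vec[of _ n n _ n])
  also have "\<dots> = l \<cdot>\<^sub>v v"
  proof (rule eq_vecI)
    fix i assume i: "i < dim_vec (l \<cdot>\<^sub>v v)"
    hence i: "i < n" using v by simp
    show "(?A *\<^sub>v w) $ i = (l \<cdot>\<^sub>v v) $ i"
    proof (cases "Suc i < n")
      case True
      have "(?A *\<^sub>v w) $ i = a * w $ i + (1 - a) * w $ Suc i" using A_mult[OF i w] True by simp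
      also have "\<dots> = a * (a * sin ((real i + 1) * t) + (1 - a) * sin (real i * t))
          + (1 - a) * (a * sin ((real i + 2) * t) + (1 - a) * sin ((real i + 1) * t))"
        using wk[OF i] wk[OF True] by (simp add: add.commute)
      also have "\<dots> = (a^2 + (1-a)^2) * sin ((real i + 1) * t) + a * (1 - a) * (sin (real i * t) + sin ((real i + 2) * t))"
        by (simp add: algebra_simps power2_eq_square)
      also have "\<dots> = l * sin ((real i + 1) * t)" unfolding trig3 l_def by (simp add: algebra_simps)
      finally show ?thesis using i by (simp add: v_def)
    next
      case False
      hence "Suc i = n" using i by simp
      hence "sin ((real i + 1) * t) = 0" using sn by (metis of_nat_Suc add.commute)
      thus ?thesis using A_mult[OF i w] False i by (simp add: v_def)
    qed
  qed (use v A in simp)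
  finally have "eigenvector B v l" unfolding eigenvector_def using Bc v vnz by simp
  hence "eigenvalue B l" unfolding eigenvalue_def by blast
  thus ?thesis using eigenvalue_root_char_poly[OF Bc] unfolding l_def t_def by simp
qed


lemma B_entry:
  fixes a :: real
  assumes "i < n" "j < n"
  shows "(A_alpha a n (dipath_arcs n) * transpose_mat (A_alpha a n (dipath_arcs n))) $$ (i,j)
    = (if Suc i < n then a * A_alpha a n (dipath_arcs n) $$ (j,i)
          + (1 - a) * A_alpha a n (dipath_arcs n) $$ (j, Suc i) else 0)"
proof -
  let ?A = "A_alpha a n (dipath_arcs n)"
  have A: "?A \<in> carrier_mat n n" by (rule A_carrier)
  have "(?A * transpose_mat ?A) $$ (i,j) = (?A *\<^sub>v row ?A j) $ i"
    using A assms by simp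
  also have "\<dots> = (if Suc i < n then a * row ?A j $ i + (1 - a) * row ?A j $ Suc i else 0)"
    by (rule A_mult) (use A assms in simp_all)
  finally show ?thesis using A assms by auto
qed

lemma zero_root:
  fixes a :: real
  assumes n: "1 \<le> n"
  defines "B \<equiv> A_alpha a n (dipath_arcs n) * transpose_mat (A_alpha a n (dipath_arcs n))"
  shows "poly (char_poly B) 0 = 0"
proof -
  let ?A = "A_alpha a n (dipath_arcs n)"
  have A: "?A \<in> carrier_mat n n" by (rule A_carrier)
  have Bc: "B \<in> carrier_mat n n" using A unfolding B_def by simp
  define v :: "real vec" where "v = unit_vec n (n - 1)"
  have v: "v \<in> carrier_vec n" unfolding v_def by simp
  have vnz: "v \<noteq> 0\<^sub>v n" unfolding v_def using n
    by (metis diff_less index_unit_vec(1) index_zero_vec(1) less_numeral_extra(1) less_le_trans zero_neq_one)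
  have w: "transpose_mat ?A *\<^sub>v v = 0\<^sub>v n"
  proof (rule eq_vecI)
    fix k assume "k < dim_vec (0\<^sub>v n :: real vec)"
    hence k: "k < n" by simp
    show "(transpose_mat ?A *\<^sub>v v) $ k = 0\<^sub>v n $ k"
      unfolding AT_mult[OF k v] using k by (auto simp: v_def)
  qed (use A in simp)
  have "B *\<^sub>v v = ?A *\<^sub>v (transpose_mat ?A *\<^sub>v v)" unfolding B_def
    using A v by (simp add: assoc_mult_mat_vec[of _ n n _ n])
  also have "\<dots> = 0 \<cdot>\<^sub>v v" unfolding w using A v by auto
  finally have "eigenvector B v 0" unfolding eigenvector_def using Bc v vnz by simp
  hence "eigenvalue B 0" unfolding eigenvalue_def by blast
  thus ?thesis using eigenvalue_root_char_poly[OF Bc] by simp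
qed


lemma proots_linprod: "proots (\<Prod>a\<leftarrow>l. [:- a, 1:]) = mset (l :: real list)"
proof (induction l)
  case (Cons a l)
  have "0 \<notin> set (map (\<lambda>a. [:- a, 1:]) l)" by auto
  hence "(\<Prod>a\<leftarrow>l. [:- a, 1:]) \<noteq> 0" by (simp add: prod_list_zero_iff del: set_map)
  hence "proots ([:- a, 1:] * (\<Prod>a\<leftarrow>l. [:- a, 1:])) = proots [:- a, 1:] + proots (\<Prod>a\<leftarrow>l. [:- a, 1:])"
    by (intro proots_mult) auto
  moreover have "proots [:- a, 1:] = {#a#}" using proots_linear_factor[of "-a"] by simp
  ultimately show ?case using Cons by simp
qed simp
lemma mupos: fixes \<alpha> :: real assumes "j \<in> {1..<n}" "0 < \<alpha> * (1 - \<alpha>)"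
  shows "0 < \<alpha>^2 + (1-\<alpha>)^2 + 2*\<alpha>*(1-\<alpha>)*cos (real j * pi / real n)"
  proof -
    have "cos pi < cos (real j * pi / real n)"
      using assms by (intro cos_monotone_0_pi) (auto simp: field_simps)
    hence c: "-1 < cos (real j * pi / real n)" by simp
    have "0 \<le> (2*\<alpha> - 1)^2" by simp
    also have "(2*\<alpha> - 1)^2 = \<alpha>^2 + (1-\<alpha>)^2 + 2*\<alpha>*(1-\<alpha>)*(-1)" by (simp add: power2_eq_square algebra_simps)
    also have "\<dots> < \<alpha>^2 + (1-\<alpha>)^2 + 2*\<alpha>*(1-\<alpha>)*cos (real j * pi / real n)" using mult_strict_left_mono[OF c, of "2*\<alpha>*(1-\<alpha>)"] assms by simp
    finally show ?thesis .
  qed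

lemma th: "j \<in> {1..<n} \<Longrightarrow> 0 < real j * pi / real n \<and> real j * pi / real n < pi"
    by (auto simp: field_simps)
lemma muinj: fixes \<alpha> :: real assumes "0 < \<alpha> * (1 - \<alpha>)"
  shows "inj_on (\<lambda>j. \<alpha>^2 + (1-\<alpha>)^2 + 2*\<alpha>*(1-\<alpha>)*cos (real j * pi / real n)) {1..<n}"
  proof (rule inj_onI)
    fix j k assume j: "j \<in> {1..<n}" and k: "k \<in> {1..<n}"
      and e: "\<alpha>^2 + (1-\<alpha>)^2 + 2*\<alpha>*(1-\<alpha>)*cos (real j * pi / real n) = \<alpha>^2 + (1-\<alpha>)^2 + 2*\<alpha>*(1-\<alpha>)*cos (real k * pi / real n)"
    hence e2: "(2*\<alpha>*(1-\<alpha>))*cos (real j * pi / real n) = (2*\<alpha>*(1-\<alpha>))*cos (real k * pi / real n)" by linarith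
    have "2*\<alpha>*(1-\<alpha>) \<noteq> 0" using assms by linarith
    hence "cos (real j * pi / real n) = cos (real k * pi / real n)" using e2 mult_left_cancel by blast
    hence "real j * pi / real n = real k * pi / real n"
      using th[OF j] th[OF k] cos_inj_pi[of "real j * pi / real n" "real k * pi / real n"] by auto
    moreover have "real n \<noteq> 0" using j by auto
    ultimately have "real j * pi = real k * pi" by (simp add: divide_cancel_right)
    thus "j = k" by simp
  qed

lemma proots_eq_distinct:
  fixes p :: "real poly"
  assumes p: "p \<noteq> 0" and d: "distinct L" and r: "\<And>x. x \<in> set L \<Longrightarrow> poly p x = 0"
    and deg: "degree p \<le> length L"
  shows "proots p = mset L"
proof -
  have sub: "mset L \<subseteq># proots p"
  proof (rule mset_subset_eqI)
    fix x
    show "count (mset L) x \<le> count (proots p) x"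
    proof (cases "x \<in> set L")
      case True
      have "count (mset L) x = 1" using d True by (simp add: distinct_count_atmost_1)
      moreover have "x \<in># proots p" using True r p by simp
      moreover have "0 < count (proots p) x" using \<open>x \<in># proots p\<close> by simp
      ultimately show ?thesis by linarith
    next
      case False thus ?thesis by (metis count_eq_zero_iff set_mset_mset zero_le)
    qed
  qed
  have "size (proots p) \<le> size (mset L)" using size_proots_le[of p] deg by simp
  thus ?thesis using sub
    by (metis mset_subset_size subset_mset.le_less leD)
qed

lemma main_pos:
  fixes n :: nat and \<alpha> :: real
  assumes "n \<ge> 1" and "0 < \<alpha>" and "\<alpha> < 1"
  shows "singular_values (A_alpha \<alpha> n (dipath_arcs n)) =
    {#0#} + mset (map (\<lambda>j. sqrt (2 * \<alpha>^2 - 2 * \<alpha> + 1 + 2 * \<alpha> * (1 - \<alpha>) * cos (real j * pi / real n)))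
                      [1..<n])"
proof -
  let ?A = "A_alpha \<alpha> n (dipath_arcs n)"
  let ?B = "?A * transpose_mat ?A"
  define mu where "mu j = \<alpha>^2 + (1-\<alpha>)^2 + 2*\<alpha>*(1-\<alpha>)*cos (real j * pi / real n)" for j :: nat
  define L where "L = 0 # map mu [1..<n]"
  have A: "?A \<in> carrier_mat n n" by (rule A_carrier)
  have Bc: "?B \<in> carrier_mat n n" using A by simp
  have ab: "0 < \<alpha> * (1 - \<alpha>)" using assms by simp
  have d: "distinct L" unfolding L_def using mupos[OF _ ab] muinj[OF ab]
    unfolding mu_def[abs_def] by (auto simp: distinct_map) (metis less_irrefl)
  have p: "char_poly ?B \<noteq> 0" using degree_monic_char_poly[OF Bc] by auto
  have r: "poly (char_poly ?B) x = 0" if x: "x \<in> set L" for x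
  proof -
    consider "x = 0" | j where "j \<in> {1..<n}" "x = mu j" using x unfolding L_def by auto
    thus ?thesis
    proof cases
      case 1 thus ?thesis using zero_root[of n \<alpha>] assms by simp
    next
      case (2 j) thus ?thesis using eigen_root[of j n \<alpha>] unfolding mu_def by simp
    qed
  qed
  have deg: "degree (char_poly ?B) \<le> length L"
    using degree_monic_char_poly[OF Bc] assms unfolding L_def by simp
  have "proots (char_poly ?B) = mset L" by (rule proots_eq_distinct[OF p d r deg])
  hence "singular_values ?A = mset (map sqrt L)" unfolding singular_values_def by simp
  also have "map sqrt L = 0 # map (\<lambda>j. sqrt (2 * \<alpha>^2 - 2 * \<alpha> + 1 + 2 * \<alpha> * (1 - \<alpha>) * cos (real j * pi / real n))) [1..<n]"
    unfolding L_def mu_def by (simp add: power2_eq_square algebra_simps)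
  finally show ?thesis by simp
qed

lemma main_zero:
  fixes n :: nat
  assumes "n \<ge> 1"
  shows "singular_values (A_alpha 0 n (dipath_arcs n)) = {#0#} + mset (replicate (n-1) 1)"
proof -
  let ?A = "A_alpha 0 n (dipath_arcs n)"
  let ?B = "?A * transpose_mat ?A"
  have A: "?A \<in> carrier_mat n n" by (rule A_carrier)
  have Bc: "?B \<in> carrier_mat n n" using A by simp
  have Be: "?B $$ (i,j) = (if i = j \<and> Suc i < n then 1 else 0)" if "i < n" "j < n" for i j
    using that by (simp add: B_entry A_entry)
  have ut: "upper_triangular ?B" unfolding upper_triangular_def using Be Bc by auto
  have "char_poly ?B = (\<Prod>a\<leftarrow>diag_mat ?B. [:- a, 1:])" by (rule char_poly_upper_triangular[OF Bc ut])
  hence "proots (char_poly ?B) = mset (diag_mat ?B)"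
    by (simp add: proots_linprod)
  also have "diag_mat ?B = map (\<lambda>i. if Suc i < n then 1 else 0) [0..<n]"
    unfolding diag_mat_def using Bc Be by auto
  also have "map (\<lambda>i. if Suc i < n then 1 else 0 :: real) [0..<n] = replicate (n-1) 1 @ [0]"
  proof -
    obtain m where m: "n = Suc m" using assms by (cases n) auto
    have "map (\<lambda>i. if Suc i < n then 1 else 0 :: real) [0..<m] = replicate m 1"
      by (rule nth_equalityI) (auto simp: m)
    thus ?thesis unfolding m by simp
  qed
  finally show ?thesis unfolding singular_values_def by simp
qed

theorem lemma2p1:
  fixes n :: nat and \<alpha> :: real
  assumes "n \<ge> 1" and "0 \<le> \<alpha>" and "\<alpha> < 1"
  shows "singular_values (A_alpha \<alpha> n (dipath_arcs n)) =
    {#0#} + mset (map (\<lambda>j. sqrt (2 * \<alpha>^2 - 2 * \<alpha> + 1 + 2 * \<alpha> * (1 - \<alpha>) * cos (real j * pi / real n)))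
                      [1..<n])"
proof (cases "\<alpha> = 0")
  case True
  have "map (\<lambda>j. sqrt (2 * \<alpha>^2 - 2 * \<alpha> + 1 + 2 * \<alpha> * (1 - \<alpha>) * cos (real j * pi / real n))) [1..<n]
      = replicate (n-1) 1" using True by (simp add: map_replicate_const)
  thus ?thesis using main_zero[OF assms(1)] True by simp
next
  case False
  thus ?thesis using main_pos[of n \<alpha>] assms by simp
qed

end
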